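(* For a right $R$-module $M$, the following are equivalent: (1) $M$ is injective; (2) $M$ is pseudo principally $N$-injective for every right $R$-module $N$.
   Context: All rings are associative with identity and all modules are unitary right $R$-modules. A submodule $A$ of $N$ is $N$-cyclic if $A\cong N/L$ for some submodule $L$ of $N$ (equivalently, $A$ is the image of an endomorphism of $N$). $M$ is pseudo principally $N$-injective if for every $N$-cyclic submodule $A$ of $N$, every $R$-monomorphism $A\to M$ extends to an $R$-homomorphism $N\to M$. *)

theory Defs
  imports "HOL-Algebra.Ring"
begin

text \<open>Right R-modules: an additive abelian group (the additive part of a ring record)
  together with a right action of the ring R.\<close>

record ('r, 'm) rmod = "'m ring" +
  ract :: "'m \<Rightarrow> 'r \<Rightarrow> 'm"

definition right_module :: "('r, 'c) ring_scheme \<Rightarrow> ('r, 'm) rmod \<Rightarrow> bool" where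
  "right_module R M \<longleftrightarrow>
     ring R \<and> abelian_group M \<and>
     (\<forall>x\<in>carrier M. \<forall>r\<in>carrier R. ract M x r \<in> carrier M) \<and>
     (\<forall>x\<in>carrier M. \<forall>y\<in>carrier M. \<forall>r\<in>carrier R.
        ract M (x \<oplus>\<^bsub>M\<^esub> y) r = ract M x r \<oplus>\<^bsub>M\<^esub> ract M y r) \<and>
     (\<forall>x\<in>carrier M. \<forall>r\<in>carrier R. \<forall>s\<in>carrier R.
        ract M x (r \<oplus>\<^bsub>R\<^esub> s) = ract M x r \<oplus>\<^bsub>M\<^esub> ract M x s) \<and>
     (\<forall>x\<in>carrier M. \<forall>r\<in>carrier R. \<forall>s\<in>carrier R.
        ract M x (r \<otimes>\<^bsub>R\<^esub> s) = ract M (ract M x r) s) \<and>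
     (\<forall>x\<in>carrier M. ract M x \<one>\<^bsub>R\<^esub> = x)"

definition right_submodule :: "('r, 'c) ring_scheme \<Rightarrow> 'm set \<Rightarrow> ('r, 'm) rmod \<Rightarrow> bool" where
  "right_submodule R A M \<longleftrightarrow>
     A \<subseteq> carrier M \<and> \<zero>\<^bsub>M\<^esub> \<in> A \<and>
     (\<forall>x\<in>A. \<forall>y\<in>A. x \<oplus>\<^bsub>M\<^esub> y \<in> A) \<and>
     (\<forall>x\<in>A. \<ominus>\<^bsub>M\<^esub> x \<in> A) \<and>
     (\<forall>x\<in>A. \<forall>r\<in>carrier R. ract M x r \<in> A)"

definition rlin_on :: "('r, 'c) ring_scheme \<Rightarrow> 'n set \<Rightarrow> ('r, 'n) rmod \<Rightarrow> ('r, 'm) rmod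
    \<Rightarrow> ('n \<Rightarrow> 'm) \<Rightarrow> bool" where
  "rlin_on R A N M f \<longleftrightarrow>
     (\<forall>x\<in>A. f x \<in> carrier M) \<and>
     (\<forall>x\<in>A. \<forall>y\<in>A. f (x \<oplus>\<^bsub>N\<^esub> y) = f x \<oplus>\<^bsub>M\<^esub> f y) \<and>
     (\<forall>x\<in>A. \<forall>r\<in>carrier R. f (ract N x r) = ract M (f x) r)"

definition rhom :: "('r, 'c) ring_scheme \<Rightarrow> ('r, 'n) rmod \<Rightarrow> ('r, 'm) rmod
    \<Rightarrow> ('n \<Rightarrow> 'm) \<Rightarrow> bool" where
  "rhom R N M f \<longleftrightarrow> rlin_on R (carrier N) N M f"

definition N_cyclic :: "('r, 'c) ring_scheme \<Rightarrow> 'n set \<Rightarrow> ('r, 'n) rmod \<Rightarrow> bool" where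
  "N_cyclic R A N \<longleftrightarrow> (\<exists>g. rhom R N N g \<and> A = g ` carrier N)"

definition pseudo_principally_injective ::
    "('r, 'c) ring_scheme \<Rightarrow> ('r, 'm) rmod \<Rightarrow> ('r, 'n) rmod \<Rightarrow> bool" where
  "pseudo_principally_injective R M N \<longleftrightarrow>
     (\<forall>A. right_submodule R A N \<and> N_cyclic R A N \<longrightarrow>
        (\<forall>f. rlin_on R A N M f \<and> inj_on f A \<longrightarrow>
           (\<exists>h. rhom R N M h \<and> (\<forall>x\<in>A. h x = f x))))"

definition ppi_all :: "('r, 'c) ring_scheme \<Rightarrow> ('r, 'm) rmod \<Rightarrow> 'n itself \<Rightarrow> bool" where
  "ppi_all R M _ \<longleftrightarrow>
     (\<forall>N :: ('r, 'n) rmod. right_module R N \<longrightarrow> pseudo_principally_injective R M N)"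

definition injective_mod :: "('r, 'c) ring_scheme \<Rightarrow> ('r, 'm) rmod \<Rightarrow> 'b itself \<Rightarrow> bool" where
  "injective_mod R M _ \<longleftrightarrow>
     (\<forall>B :: ('r, 'b) rmod. right_module R B \<longrightarrow>
        (\<forall>A. right_submodule R A B \<longrightarrow>
           (\<forall>f. rlin_on R A B M f \<longrightarrow>
              (\<exists>h. rhom R B M h \<and> (\<forall>x\<in>A. h x = f x)))))"

end

theory Submission
  imports Defs
begin

lemma rm_ag: "right_module R M \<Longrightarrow> abelian_group M"
  by (simp add: right_module_def)

lemma rm_ract_closed: "right_module R M \<Longrightarrow> x \<in> carrier M \<Longrightarrow> r \<in> carrier R \<Longrightarrow> ract M x r \<in> carrier M"
  by (simp add: right_module_def)

lemma rm_ract_add: "right_module R M \<Longrightarrow> x \<in> carrier M \<Longrightarrow> y \<in> carrier M \<Longrightarrow> r \<in> carrier R \<Longrightarrow>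
   ract M (x \<oplus>\<^bsub>M\<^esub> y) r = ract M x r \<oplus>\<^bsub>M\<^esub> ract M y r"
  by (simp add: right_module_def)

lemma rm_ract_neg: assumes "right_module R M" "x \<in> carrier M" "r \<in> carrier R"
  shows "ract M (\<ominus>\<^bsub>M\<^esub> x) r = \<ominus>\<^bsub>M\<^esub> ract M x r"
proof -
  interpret abelian_group M using rm_ag[OF assms(1)] .
  have "ract M (\<ominus>\<^bsub>M\<^esub> x) r \<oplus>\<^bsub>M\<^esub> ract M x r = ract M \<zero>\<^bsub>M\<^esub> r"
    using rm_ract_add[OF assms(1) _ assms(2,3), of "\<ominus>\<^bsub>M\<^esub> x"] assms by (simp add: l_neg)
  moreover have "ract M \<zero>\<^bsub>M\<^esub> r = \<zero>\<^bsub>M\<^esub>"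
  proof -
    have "ract M \<zero>\<^bsub>M\<^esub> r \<oplus>\<^bsub>M\<^esub> ract M \<zero>\<^bsub>M\<^esub> r = ract M \<zero>\<^bsub>M\<^esub> r"
      using rm_ract_add[OF assms(1) _ _ assms(3), of "\<zero>\<^bsub>M\<^esub>" "\<zero>\<^bsub>M\<^esub>"] by simp
    thus ?thesis using rm_ract_closed[OF assms(1) _ assms(3), of "\<zero>\<^bsub>M\<^esub>"]
      by (metis add.l_cancel_one zero_closed)
  qed
  ultimately show ?thesis using assms rm_ract_closed[OF assms(1)]
    by (metis a_inv_closed add.inv_equality)
qed

lemma lin_zero: assumes "right_module R N" "right_module R M" "rlin_on R A N M f" "\<zero>\<^bsub>N\<^esub> \<in> A"
  shows "f \<zero>\<^bsub>N\<^esub> = \<zero>\<^bsub>M\<^esub>"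
proof -
  interpret N: abelian_group N using rm_ag[OF assms(1)] .
  interpret M: abelian_group M using rm_ag[OF assms(2)] .
  have "f \<zero>\<^bsub>N\<^esub> \<oplus>\<^bsub>M\<^esub> f \<zero>\<^bsub>N\<^esub> = f \<zero>\<^bsub>N\<^esub>" using assms(3,4) unfolding rlin_on_def
    by (metis N.l_zero N.zero_closed)
  moreover have "f \<zero>\<^bsub>N\<^esub> \<in> carrier M" using assms(3,4) unfolding rlin_on_def by auto
  ultimately show ?thesis by (metis M.add.l_cancel_one M.zero_closed)
qed

lemma lin_neg: assumes "right_module R N" "right_module R M" "rlin_on R A N M f" "right_submodule R A N" "x \<in> A"
  shows "f (\<ominus>\<^bsub>N\<^esub> x) = \<ominus>\<^bsub>M\<^esub> f x"
proof -
  interpret N: abelian_group N using rm_ag[OF assms(1)] .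
  interpret M: abelian_group M using rm_ag[OF assms(2)] .
  have sub: "A \<subseteq> carrier N" "\<ominus>\<^bsub>N\<^esub> x \<in> A" "\<zero>\<^bsub>N\<^esub> \<in> A" using assms(4,5) unfolding right_submodule_def by auto
  have "f (\<ominus>\<^bsub>N\<^esub> x) \<oplus>\<^bsub>M\<^esub> f x = f \<zero>\<^bsub>N\<^esub>" using assms(3,5) sub unfolding rlin_on_def
    by (metis N.l_neg in_mono)
  also have "\<dots> = \<zero>\<^bsub>M\<^esub>" using lin_zero[OF assms(1-3)] sub by simp
  finally show ?thesis using assms(3,5) sub unfolding rlin_on_def
    by (metis M.add.inv_equality)
qed

definition dsum :: "('r,'x) rmod \<Rightarrow> ('r,'y) rmod \<Rightarrow> ('r,'x\<times>'y) rmod" where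
"dsum N1 N2 = \<lparr>carrier = carrier N1 \<times> carrier N2, mult = (\<lambda>a b. undefined), one = undefined,
   zero = (\<zero>\<^bsub>N1\<^esub>, \<zero>\<^bsub>N2\<^esub>), add = (\<lambda>a b. (fst a \<oplus>\<^bsub>N1\<^esub> fst b, snd a \<oplus>\<^bsub>N2\<^esub> snd b)),
   ract = (\<lambda>a r. (ract N1 (fst a) r, ract N2 (snd a) r))\<rparr>"

lemma dsum_simps: "carrier (dsum N1 N2) = carrier N1 \<times> carrier N2"
  "\<zero>\<^bsub>dsum N1 N2\<^esub> = (\<zero>\<^bsub>N1\<^esub>, \<zero>\<^bsub>N2\<^esub>)"
  "(a,b) \<oplus>\<^bsub>dsum N1 N2\<^esub> (c,d) = (a \<oplus>\<^bsub>N1\<^esub> c, b \<oplus>\<^bsub>N2\<^esub> d)"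
  "ract (dsum N1 N2) (a,b) r = (ract N1 a r, ract N2 b r)"
  by (simp_all add: dsum_def)

lemma dsum_module: assumes "right_module R N1" "right_module R N2"
  shows "right_module R (dsum N1 N2)"
proof -
  interpret A: abelian_group N1 using rm_ag[OF assms(1)] .
  interpret B: abelian_group N2 using rm_ag[OF assms(2)] .
  have ag: "abelian_group (dsum N1 N2)"
  proof (rule abelian_groupI, goal_cases)
    case (6 x)
    then show ?case
      by (cases x) (auto simp: dsum_simps intro!: bexI[of _ "(\<ominus>\<^bsub>N1\<^esub> fst x, \<ominus>\<^bsub>N2\<^esub> snd x)"] A.l_neg B.l_neg)
  qed (auto simp: dsum_simps A.a_ac B.a_ac)
  show ?thesis using assms ag unfolding right_module_def
    by (auto simp: dsum_simps)
qed

lemma dsum_neg: assumes "right_module R N1" "right_module R N2" "x \<in> carrier N1" "y \<in> carrier N2"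
  shows "\<ominus>\<^bsub>dsum N1 N2\<^esub> (x,y) = (\<ominus>\<^bsub>N1\<^esub> x, \<ominus>\<^bsub>N2\<^esub> y)"
proof -
  interpret A: abelian_group N1 using rm_ag[OF assms(1)] .
  interpret B: abelian_group N2 using rm_ag[OF assms(2)] .
  interpret D: abelian_group "dsum N1 N2" using rm_ag[OF dsum_module[OF assms(1,2)]] .
  show ?thesis
    by (rule D.add.inv_equality) (use assms in \<open>auto simp: dsum_simps A.l_neg B.l_neg\<close>)
qed


definition qcls :: "('r,'x) rmod \<Rightarrow> 'x set \<Rightarrow> 'x \<Rightarrow> 'x set" where
  "qcls Q K q = {q \<oplus>\<^bsub>Q\<^esub> k | k. k \<in> K}"

definition qrep :: "('r,'x) rmod \<Rightarrow> 'x set \<Rightarrow> 'x set \<Rightarrow> 'x" where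
  "qrep Q K X = (SOME q. q \<in> carrier Q \<and> X = qcls Q K q)"

definition quot :: "('r,'x) rmod \<Rightarrow> 'x set \<Rightarrow> ('r,'x set) rmod" where
"quot Q K = \<lparr>carrier = qcls Q K ` carrier Q, mult = (\<lambda>a b. undefined), one = undefined,
   zero = qcls Q K \<zero>\<^bsub>Q\<^esub>, add = (\<lambda>X Y. qcls Q K (qrep Q K X \<oplus>\<^bsub>Q\<^esub> qrep Q K Y)),
   ract = (\<lambda>X r. qcls Q K (ract Q (qrep Q K X) r))\<rparr>"

locale qsetup =
  fixes R :: "('r,'c) ring_scheme" and Q :: "('r,'x) rmod" and K
  assumes Q: "right_module R Q" and K: "right_submodule R K Q"
begin

sublocale abelian_group Q using rm_ag[OF Q] .

lemma Ksub: "K \<subseteq> carrier Q" "\<zero>\<^bsub>Q\<^esub> \<in> K" "\<And>x y. x \<in> K \<Longrightarrow> y \<in> K \<Longrightarrow> x \<oplus>\<^bsub>Q\<^esub> y \<in> K"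
  "\<And>x. x \<in> K \<Longrightarrow> \<ominus>\<^bsub>Q\<^esub> x \<in> K" "\<And>x r. x \<in> K \<Longrightarrow> r \<in> carrier R \<Longrightarrow> ract Q x r \<in> K"
  using K unfolding right_submodule_def by auto

lemma t4: "q \<in> carrier Q \<Longrightarrow> q' \<in> carrier Q \<Longrightarrow> k \<in> carrier Q \<Longrightarrow> q \<oplus>\<^bsub>Q\<^esub> k = q' \<oplus>\<^bsub>Q\<^esub> ((q \<oplus>\<^bsub>Q\<^esub> \<ominus>\<^bsub>Q\<^esub> q') \<oplus>\<^bsub>Q\<^esub> k)"
  by (simp add: a_assoc a_lcomm r_neg r_neg2)
lemma t5: "q \<in> carrier Q \<Longrightarrow> q' \<in> carrier Q \<Longrightarrow> k \<in> carrier Q \<Longrightarrow> q' \<oplus>\<^bsub>Q\<^esub> k = q \<oplus>\<^bsub>Q\<^esub> (\<ominus>\<^bsub>Q\<^esub> (q \<oplus>\<^bsub>Q\<^esub> \<ominus>\<^bsub>Q\<^esub> q') \<oplus>\<^bsub>Q\<^esub> k)"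
  by (simp add: minus_add a_assoc[symmetric] r_neg)
lemma t3: "q \<in> carrier Q \<Longrightarrow> q' \<in> carrier Q \<Longrightarrow> k \<in> carrier Q \<Longrightarrow> q = q' \<oplus>\<^bsub>Q\<^esub> k \<Longrightarrow> q \<oplus>\<^bsub>Q\<^esub> \<ominus>\<^bsub>Q\<^esub> q' = k"
  by (simp add: a_ac r_neg)

lemma qcls_eq: assumes "q \<in> carrier Q" "q' \<in> carrier Q"
  shows "qcls Q K q = qcls Q K q' \<longleftrightarrow> q \<oplus>\<^bsub>Q\<^esub> \<ominus>\<^bsub>Q\<^esub> q' \<in> K"
proof
  assume e: "qcls Q K q = qcls Q K q'"
  have "q \<in> qcls Q K q" unfolding qcls_def using Ksub(2) assms by force
  then obtain k where k: "k \<in> K" "q = q' \<oplus>\<^bsub>Q\<^esub> k" using e unfolding qcls_def by auto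
  have "k \<in> carrier Q" using k Ksub(1) by auto
  then have "q \<oplus>\<^bsub>Q\<^esub> \<ominus>\<^bsub>Q\<^esub> q' = k" using k assms t3 by blast
  thus "q \<oplus>\<^bsub>Q\<^esub> \<ominus>\<^bsub>Q\<^esub> q' \<in> K" using k by simp
next
  assume d: "q \<oplus>\<^bsub>Q\<^esub> \<ominus>\<^bsub>Q\<^esub> q' \<in> K"
  show "qcls Q K q = qcls Q K q'"
  proof
    show "qcls Q K q \<subseteq> qcls Q K q'"
    proof
      fix x assume "x \<in> qcls Q K q"
      then obtain k where k: "k \<in> K" "x = q \<oplus>\<^bsub>Q\<^esub> k" unfolding qcls_def by auto
      have "x = q' \<oplus>\<^bsub>Q\<^esub> ((q \<oplus>\<^bsub>Q\<^esub> \<ominus>\<^bsub>Q\<^esub> q') \<oplus>\<^bsub>Q\<^esub> k)" using k t4 assms Ksub(1) by blast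
      thus "x \<in> qcls Q K q'" unfolding qcls_def using Ksub(3)[OF d k(1)] by blast
    qed
    show "qcls Q K q' \<subseteq> qcls Q K q"
    proof
      fix x assume "x \<in> qcls Q K q'"
      then obtain k where k: "k \<in> K" "x = q' \<oplus>\<^bsub>Q\<^esub> k" unfolding qcls_def by auto
      have "x = q \<oplus>\<^bsub>Q\<^esub> (\<ominus>\<^bsub>Q\<^esub> (q \<oplus>\<^bsub>Q\<^esub> \<ominus>\<^bsub>Q\<^esub> q') \<oplus>\<^bsub>Q\<^esub> k)" using k t5 assms Ksub(1) by blast
      thus "x \<in> qcls Q K q" unfolding qcls_def using Ksub(3)[OF Ksub(4)[OF d] k(1)] by blast
    qed
  qed
qed

lemma qrep: assumes "q \<in> carrier Q"
  shows "qrep Q K (qcls Q K q) \<in> carrier Q" "qcls Q K (qrep Q K (qcls Q K q)) = qcls Q K q"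
proof -
  have "\<exists>p. p \<in> carrier Q \<and> qcls Q K q = qcls Q K p" using assms by blast
  from someI_ex[OF this] show "qrep Q K (qcls Q K q) \<in> carrier Q" "qcls Q K (qrep Q K (qcls Q K q)) = qcls Q K q"
    unfolding qrep_def by auto
qed

lemma q_carrier: "carrier (quot Q K) = qcls Q K ` carrier Q" by (simp add: quot_def)
lemma q_zero: "\<zero>\<^bsub>quot Q K\<^esub> = qcls Q K \<zero>\<^bsub>Q\<^esub>" by (simp add: quot_def)

lemma q_add: assumes "q \<in> carrier Q" "p \<in> carrier Q"
  shows "qcls Q K q \<oplus>\<^bsub>quot Q K\<^esub> qcls Q K p = qcls Q K (q \<oplus>\<^bsub>Q\<^esub> p)"
proof -
  let ?a = "qrep Q K (qcls Q K q)" and ?b = "qrep Q K (qcls Q K p)"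
  have a: "?a \<in> carrier Q" "?a \<oplus>\<^bsub>Q\<^esub> \<ominus>\<^bsub>Q\<^esub> q \<in> K" using qrep[OF assms(1)] qcls_eq assms by auto
  have b: "?b \<in> carrier Q" "?b \<oplus>\<^bsub>Q\<^esub> \<ominus>\<^bsub>Q\<^esub> p \<in> K" using qrep[OF assms(2)] qcls_eq assms by auto
  have "(?a \<oplus>\<^bsub>Q\<^esub> ?b) \<oplus>\<^bsub>Q\<^esub> \<ominus>\<^bsub>Q\<^esub> (q \<oplus>\<^bsub>Q\<^esub> p) = (?a \<oplus>\<^bsub>Q\<^esub> \<ominus>\<^bsub>Q\<^esub> q) \<oplus>\<^bsub>Q\<^esub> (?b \<oplus>\<^bsub>Q\<^esub> \<ominus>\<^bsub>Q\<^esub> p)"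
    using a b assms by (simp add: minus_add a_ac)
  hence "(?a \<oplus>\<^bsub>Q\<^esub> ?b) \<oplus>\<^bsub>Q\<^esub> \<ominus>\<^bsub>Q\<^esub> (q \<oplus>\<^bsub>Q\<^esub> p) \<in> K" using Ksub(3) a b by simp
  thus ?thesis using qcls_eq a b assms by (simp add: quot_def)
qed

lemma q_ract: assumes "q \<in> carrier Q" "r \<in> carrier R"
  shows "ract (quot Q K) (qcls Q K q) r = qcls Q K (ract Q q r)"
proof -
  let ?a = "qrep Q K (qcls Q K q)"
  have a: "?a \<in> carrier Q" "?a \<oplus>\<^bsub>Q\<^esub> \<ominus>\<^bsub>Q\<^esub> q \<in> K" using qrep[OF assms(1)] qcls_eq assms by auto
  have "ract Q ?a r \<oplus>\<^bsub>Q\<^esub> \<ominus>\<^bsub>Q\<^esub> ract Q q r = ract Q (?a \<oplus>\<^bsub>Q\<^esub> \<ominus>\<^bsub>Q\<^esub> q) r"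
    using a assms rm_ract_add[OF Q] rm_ract_neg[OF Q] by simp
  hence "ract Q ?a r \<oplus>\<^bsub>Q\<^esub> \<ominus>\<^bsub>Q\<^esub> ract Q q r \<in> K" using Ksub(5) a assms by simp
  thus ?thesis using qcls_eq a assms rm_ract_closed[OF Q] by (simp add: quot_def)
qed

lemma quot_module: "right_module R (quot Q K)"
proof -
  have ag: "abelian_group (quot Q K)"
  proof (rule abelian_groupI, goal_cases)
    case (1 x y) then show ?case by (auto simp: q_carrier q_add)
  next
    case 2 then show ?case by (auto simp: q_carrier q_zero)
  next
    case (3 x y z) then show ?case by (auto simp: q_carrier q_add a_assoc)
  next
    case (4 x y) then show ?case by (auto simp: q_carrier q_add a_comm)
  next
    case (5 x) then show ?case by (auto simp: q_carrier q_add q_zero)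
  next
    case (6 x) then obtain q where "q \<in> carrier Q" "x = qcls Q K q" by (auto simp: q_carrier)
    then show ?case apply (simp add: q_carrier)
      apply (rule bexI[of _ "\<ominus>\<^bsub>Q\<^esub> q"]) by (auto simp: q_add l_neg q_zero)
  qed
  have RR: "ring R" using Q unfolding right_module_def by simp
  have m: "\<And>x r. x \<in> carrier Q \<Longrightarrow> r \<in> carrier R \<Longrightarrow> ract Q x r \<in> carrier Q"
    "\<And>x y r. x \<in> carrier Q \<Longrightarrow> y \<in> carrier Q \<Longrightarrow> r \<in> carrier R \<Longrightarrow> ract Q (x \<oplus>\<^bsub>Q\<^esub> y) r = ract Q x r \<oplus>\<^bsub>Q\<^esub> ract Q y r"
    "\<And>x r s. x \<in> carrier Q \<Longrightarrow> r \<in> carrier R \<Longrightarrow> s \<in> carrier R \<Longrightarrow> ract Q x (r \<oplus>\<^bsub>R\<^esub> s) = ract Q x r \<oplus>\<^bsub>Q\<^esub> ract Q x s"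
    "\<And>x r s. x \<in> carrier Q \<Longrightarrow> r \<in> carrier R \<Longrightarrow> s \<in> carrier R \<Longrightarrow> ract Q x (r \<otimes>\<^bsub>R\<^esub> s) = ract Q (ract Q x r) s"
    "\<And>x. x \<in> carrier Q \<Longrightarrow> ract Q x \<one>\<^bsub>R\<^esub> = x"
    using Q unfolding right_module_def by auto
  have Rc: "\<And>r s. r \<in> carrier R \<Longrightarrow> s \<in> carrier R \<Longrightarrow> r \<oplus>\<^bsub>R\<^esub> s \<in> carrier R"
    "\<And>r s. r \<in> carrier R \<Longrightarrow> s \<in> carrier R \<Longrightarrow> r \<otimes>\<^bsub>R\<^esub> s \<in> carrier R"
    "\<one>\<^bsub>R\<^esub> \<in> carrier R"
    using RR by (auto intro: ring.ring_simprules)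
  show ?thesis unfolding right_module_def
    apply (intro conjI RR ag ballI)
    by (auto simp: q_carrier q_add q_ract m Rc)
qed

end

lemma rm_ract_zero: assumes "right_module R M" "r \<in> carrier R"
  shows "ract M \<zero>\<^bsub>M\<^esub> r = \<zero>\<^bsub>M\<^esub>"
proof -
  interpret abelian_group M using rm_ag[OF assms(1)] .
  have "ract M \<zero>\<^bsub>M\<^esub> r \<oplus>\<^bsub>M\<^esub> ract M \<zero>\<^bsub>M\<^esub> r = ract M \<zero>\<^bsub>M\<^esub> r"
    using rm_ract_add[OF assms(1) _ _ assms(2), of "\<zero>\<^bsub>M\<^esub>" "\<zero>\<^bsub>M\<^esub>"] by simp
  thus ?thesis using rm_ract_closed[OF assms(1) _ assms(2), of "\<zero>\<^bsub>M\<^esub>"]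
    by (metis add.l_cancel_one zero_closed)
qed

lemma carrier_submodule: assumes "right_module R N" shows "right_submodule R (carrier N) N"
proof -
  interpret abelian_group N using rm_ag[OF assms] .
  show ?thesis using assms unfolding right_submodule_def right_module_def by auto
qed

lemma image_submodule: assumes N: "right_module R N" and g: "rhom R N N g"
  shows "right_submodule R (g ` carrier N) N"
proof -
  interpret abelian_group N using rm_ag[OF N] .
  have l: "rlin_on R (carrier N) N N g" using g by (simp add: rhom_def)
  have z: "g \<zero>\<^bsub>N\<^esub> = \<zero>\<^bsub>N\<^esub>" using lin_zero[OF N N l] by simp
  have n: "\<And>x. x \<in> carrier N \<Longrightarrow> g (\<ominus>\<^bsub>N\<^esub> x) = \<ominus>\<^bsub>N\<^esub> g x"
    using lin_neg[OF N N l carrier_submodule[OF N]] by simp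
  show ?thesis unfolding right_submodule_def
  proof (intro conjI ballI)
    show "g ` carrier N \<subseteq> carrier N" using l unfolding rlin_on_def by auto
    show "\<zero>\<^bsub>N\<^esub> \<in> g ` carrier N" using z by (metis image_eqI zero_closed)
    fix x assume "x \<in> g ` carrier N"
    then obtain u where u: "u \<in> carrier N" "x = g u" by auto
    show "\<ominus>\<^bsub>N\<^esub> x \<in> g ` carrier N" using u n by (metis a_inv_closed image_eqI)
    { fix r assume r: "r \<in> carrier R"
      show "ract N x r \<in> g ` carrier N" using u r l rm_ract_closed[OF N] unfolding rlin_on_def
        by (metis image_eqI) }
    { fix y assume "y \<in> g ` carrier N"
      then obtain v where v: "v \<in> carrier N" "y = g v" by auto
      show "x \<oplus>\<^bsub>N\<^esub> y \<in> g ` carrier N" using u v l unfolding rlin_on_def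
        by (metis a_closed image_eqI) }
  qed
qed

lemma dir2:
  fixes R :: "('r, 'c) ring_scheme" and M :: "('r, 'm) rmod" and B :: "('r,'b) rmod"
  assumes RM: "right_module R M" and ppi: "ppi_all R M TYPE('m \<times> ('m \<times> 'b) set)"
    and BM: "right_module R B" and As: "right_submodule R A B" and f: "rlin_on R A B M f"
  shows "\<exists>h. rhom R B M h \<and> (\<forall>x\<in>A. h x = f x)"
proof -
  interpret Mg: abelian_group M using rm_ag[OF RM] .
  interpret Bg: abelian_group B using rm_ag[OF BM] .
  have Asub: "A \<subseteq> carrier B" "\<zero>\<^bsub>B\<^esub> \<in> A" "\<And>x y. x \<in> A \<Longrightarrow> y \<in> A \<Longrightarrow> x \<oplus>\<^bsub>B\<^esub> y \<in> A"
    "\<And>x. x \<in> A \<Longrightarrow> \<ominus>\<^bsub>B\<^esub> x \<in> A" "\<And>x r. x \<in> A \<Longrightarrow> r \<in> carrier R \<Longrightarrow> ract B x r \<in> A"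
    using As unfolding right_submodule_def by auto
  have fA: "\<And>x. x \<in> A \<Longrightarrow> f x \<in> carrier M"
    "\<And>x y. x \<in> A \<Longrightarrow> y \<in> A \<Longrightarrow> f (x \<oplus>\<^bsub>B\<^esub> y) = f x \<oplus>\<^bsub>M\<^esub> f y"
    "\<And>x r. x \<in> A \<Longrightarrow> r \<in> carrier R \<Longrightarrow> f (ract B x r) = ract M (f x) r"
    using f unfolding rlin_on_def by auto
  have f0: "f \<zero>\<^bsub>B\<^esub> = \<zero>\<^bsub>M\<^esub>" using lin_zero[OF BM RM f Asub(2)] .
  have fn: "\<And>x. x \<in> A \<Longrightarrow> f (\<ominus>\<^bsub>B\<^esub> x) = \<ominus>\<^bsub>M\<^esub> f x" using lin_neg[OF BM RM f As] .
  have B0: "\<ominus>\<^bsub>B\<^esub> \<zero>\<^bsub>B\<^esub> = \<zero>\<^bsub>B\<^esub>"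
    using Bg.minus_equality[OF _ Bg.zero_closed Bg.zero_closed] by simp
  have AB: "\<And>x. x \<in> A \<Longrightarrow> x \<in> carrier B" using Asub(1) by auto
  define Q where "Q = dsum M B"
  have QM: "right_module R Q" unfolding Q_def using dsum_module[OF RM BM] .
  define K where "K = (\<lambda>a. (f a, \<ominus>\<^bsub>B\<^esub> a)) ` A"
  have KQ: "right_submodule R K Q" unfolding right_submodule_def
  proof (intro conjI ballI)
    show "K \<subseteq> carrier Q" unfolding K_def Q_def dsum_simps using fA AB by auto
    show "\<zero>\<^bsub>Q\<^esub> \<in> K" unfolding K_def Q_def dsum_simps using f0 Asub(2)
      by (intro image_eqI[of _ _ "\<zero>\<^bsub>B\<^esub>"]) (auto simp: B0)
    fix x assume "x \<in> K"
    then obtain a where a: "a \<in> A" "x = (f a, \<ominus>\<^bsub>B\<^esub> a)" unfolding K_def by auto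
    show "\<ominus>\<^bsub>Q\<^esub> x \<in> K" unfolding Q_def a(2) dsum_neg[OF RM BM fA(1)[OF a(1)] Bg.a_inv_closed[OF AB[OF a(1)]]]
      unfolding K_def using a fn AB Asub(4)
      by (intro image_eqI[of _ _ "\<ominus>\<^bsub>B\<^esub> a"]) auto
    { fix r assume r: "r \<in> carrier R"
      show "ract Q x r \<in> K" unfolding Q_def a(2) dsum_simps K_def using a r fA AB Asub(5)
        rm_ract_neg[OF BM AB[OF a(1)] r]
        by (intro image_eqI[of _ _ "ract B a r"]) auto }
    { fix y assume "y \<in> K"
      then obtain b where b: "b \<in> A" "y = (f b, \<ominus>\<^bsub>B\<^esub> b)" unfolding K_def by auto
      show "x \<oplus>\<^bsub>Q\<^esub> y \<in> K" unfolding Q_def a(2) b(2) dsum_simps K_def using a b fA AB Asub(3)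
        Bg.minus_add[OF AB[OF a(1)] AB[OF b(1)]]
        by (intro image_eqI[of _ _ "a \<oplus>\<^bsub>B\<^esub> b"]) auto }
  qed
  interpret qs: qsetup R Q K using QM KQ by (unfold_locales)
  define P where "P = quot Q K"
  have PM: "right_module R P" unfolding P_def using qs.quot_module .
  define \<iota> where "\<iota> m = qcls Q K (m, \<zero>\<^bsub>B\<^esub>)" for m
  have \<iota>c: "\<And>m. m \<in> carrier M \<Longrightarrow> \<iota> m \<in> carrier P"
    unfolding \<iota>_def P_def qs.q_carrier by (auto simp: Q_def dsum_simps)
  have \<iota>add: "\<And>x y. x \<in> carrier M \<Longrightarrow> y \<in> carrier M \<Longrightarrow> \<iota> x \<oplus>\<^bsub>P\<^esub> \<iota> y = \<iota> (x \<oplus>\<^bsub>M\<^esub> y)"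
    unfolding \<iota>_def P_def by (subst qs.q_add) (auto simp: Q_def dsum_simps)
  have \<iota>ract: "\<And>x r. x \<in> carrier M \<Longrightarrow> r \<in> carrier R \<Longrightarrow> ract P (\<iota> x) r = \<iota> (ract M x r)"
    unfolding \<iota>_def P_def by (subst qs.q_ract) (auto simp: Q_def dsum_simps rm_ract_zero[OF BM])
  have \<iota>inj: "inj_on \<iota> (carrier M)"
  proof
    fix x y assume xy: "x \<in> carrier M" "y \<in> carrier M" "\<iota> x = \<iota> y"
    hence "(x, \<zero>\<^bsub>B\<^esub>) \<oplus>\<^bsub>Q\<^esub> \<ominus>\<^bsub>Q\<^esub> (y, \<zero>\<^bsub>B\<^esub>) \<in> K"
      unfolding \<iota>_def by (subst (asm) qs.qcls_eq) (auto simp: Q_def dsum_simps)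
    hence "(x \<oplus>\<^bsub>M\<^esub> \<ominus>\<^bsub>M\<^esub> y, \<zero>\<^bsub>B\<^esub>) \<in> K"
      using xy unfolding Q_def by (simp add: dsum_neg[OF RM BM] dsum_simps B0)
    then obtain a where a: "a \<in> A" "x \<oplus>\<^bsub>M\<^esub> \<ominus>\<^bsub>M\<^esub> y = f a" "\<zero>\<^bsub>B\<^esub> = \<ominus>\<^bsub>B\<^esub> a"
      unfolding K_def by auto
    have "a = \<zero>\<^bsub>B\<^esub>" using a(3) AB[OF a(1)] by (metis Bg.minus_minus B0 Bg.zero_closed)
    hence "x \<oplus>\<^bsub>M\<^esub> \<ominus>\<^bsub>M\<^esub> y = \<zero>\<^bsub>M\<^esub>" using a f0 by simp
    thus "x = y" using xy by (metis Mg.add.inv_solve_right' Mg.l_zero Mg.a_inv_closed Mg.zero_closed Mg.minus_minus)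
  qed
  define N where "N = dsum M P"
  have NM: "right_module R N" unfolding N_def using dsum_module[OF RM PM] .
  define g where "g y = (\<zero>\<^bsub>M\<^esub>, \<iota> (fst y))" for y :: "'m \<times> ('m \<times> 'b) set"
  have g: "rhom R N N g" unfolding rhom_def rlin_on_def N_def
    by (auto simp: g_def dsum_simps \<iota>c \<iota>add \<iota>ract rm_ract_zero[OF RM] rm_ract_closed[OF RM])
  define A' where "A' = g ` carrier N"
  have A'eq: "A' = (\<lambda>x. (\<zero>\<^bsub>M\<^esub>, \<iota> x)) ` carrier M"
  proof -
    interpret Pg: abelian_group P using rm_ag[OF PM] .
    show ?thesis unfolding A'_def g_def N_def dsum_simps
      by (auto intro!: image_eqI[where x="(_, \<zero>\<^bsub>P\<^esub>)"])
  qed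
  define \<phi> where "\<phi> y = inv_into (carrier M) \<iota> (snd y)" for y :: "'m \<times> ('m \<times> 'b) set"
  have \<phi>: "\<And>x. x \<in> carrier M \<Longrightarrow> \<phi> (\<zero>\<^bsub>M\<^esub>, \<iota> x) = x"
    unfolding \<phi>_def using \<iota>inj by (simp add: inv_into_f_f)
  have \<phi>lin: "rlin_on R A' N M \<phi>" unfolding rlin_on_def A'eq N_def
    by (auto simp: \<phi> dsum_simps \<iota>add \<iota>ract rm_ract_zero[OF RM] rm_ract_closed[OF RM])
  have \<phi>inj: "inj_on \<phi> A'" unfolding A'eq by (rule inj_onI) (auto simp: \<phi>)
  have "pseudo_principally_injective R M N" using ppi NM unfolding ppi_all_def by blast
  moreover have "right_submodule R A' N" "N_cyclic R A' N"
    unfolding A'_def using image_submodule[OF NM g] g N_cyclic_def by auto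
  ultimately obtain h where h: "rhom R N M h" "\<And>x. x \<in> A' \<Longrightarrow> h x = \<phi> x"
    unfolding pseudo_principally_injective_def using \<phi>lin \<phi>inj by blast
  define e where "e b = h (\<zero>\<^bsub>M\<^esub>, qcls Q K (\<zero>\<^bsub>M\<^esub>, b))" for b
  have hl: "\<And>x. x \<in> carrier N \<Longrightarrow> h x \<in> carrier M"
    "\<And>x y. x \<in> carrier N \<Longrightarrow> y \<in> carrier N \<Longrightarrow> h (x \<oplus>\<^bsub>N\<^esub> y) = h x \<oplus>\<^bsub>M\<^esub> h y"
    "\<And>x r. x \<in> carrier N \<Longrightarrow> r \<in> carrier R \<Longrightarrow> h (ract N x r) = ract M (h x) r"
    using h(1) unfolding rhom_def rlin_on_def by auto
  have inN: "\<And>b. b \<in> carrier B \<Longrightarrow> (\<zero>\<^bsub>M\<^esub>, qcls Q K (\<zero>\<^bsub>M\<^esub>, b)) \<in> carrier N"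
    unfolding N_def P_def dsum_simps qs.q_carrier by (auto simp: Q_def dsum_simps)
  have "rhom R B M e" unfolding rhom_def rlin_on_def
  proof (intro conjI ballI)
    fix x assume x: "x \<in> carrier B"
    show "e x \<in> carrier M" unfolding e_def using hl(1) inN x by blast
    { fix y assume y: "y \<in> carrier B"
      have "(\<zero>\<^bsub>M\<^esub>, qcls Q K (\<zero>\<^bsub>M\<^esub>, x)) \<oplus>\<^bsub>N\<^esub> (\<zero>\<^bsub>M\<^esub>, qcls Q K (\<zero>\<^bsub>M\<^esub>, y))
          = (\<zero>\<^bsub>M\<^esub>, qcls Q K (\<zero>\<^bsub>M\<^esub>, x \<oplus>\<^bsub>B\<^esub> y))"
        unfolding N_def P_def dsum_simps using x y by (subst qs.q_add) (auto simp: Q_def dsum_simps)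
      thus "e (x \<oplus>\<^bsub>B\<^esub> y) = e x \<oplus>\<^bsub>M\<^esub> e y" unfolding e_def using hl(2) inN x y by metis }
    { fix r assume r: "r \<in> carrier R"
      have "ract N (\<zero>\<^bsub>M\<^esub>, qcls Q K (\<zero>\<^bsub>M\<^esub>, x)) r = (\<zero>\<^bsub>M\<^esub>, qcls Q K (\<zero>\<^bsub>M\<^esub>, ract B x r))"
        unfolding N_def P_def dsum_simps using x r
        by (subst qs.q_ract) (auto simp: Q_def dsum_simps rm_ract_zero[OF RM])
      thus "e (ract B x r) = ract M (e x) r" unfolding e_def using hl(3) inN x r by metis }
  qed
  moreover have "\<forall>a\<in>A. e a = f a"
  proof
    fix a assume a: "a \<in> A"
    have "(\<zero>\<^bsub>M\<^esub>, a) \<oplus>\<^bsub>Q\<^esub> \<ominus>\<^bsub>Q\<^esub> (f a, \<zero>\<^bsub>B\<^esub>) = (f (\<ominus>\<^bsub>B\<^esub> a), \<ominus>\<^bsub>B\<^esub> (\<ominus>\<^bsub>B\<^esub> a))"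
      unfolding Q_def using a fA(1) AB fn by (simp add: dsum_neg[OF RM BM] dsum_simps B0)
    also have "\<dots> \<in> K" unfolding K_def using a Asub(4) by auto
    finally have "qcls Q K (\<zero>\<^bsub>M\<^esub>, a) = \<iota> (f a)" unfolding \<iota>_def
      using a fA(1) AB by (subst qs.qcls_eq) (auto simp: Q_def dsum_simps)
    hence "e a = h (\<zero>\<^bsub>M\<^esub>, \<iota> (f a))" unfolding e_def by simp
    also have "\<dots> = \<phi> (\<zero>\<^bsub>M\<^esub>, \<iota> (f a))" using h(2) a fA(1) unfolding A'eq by auto
    also have "\<dots> = f a" using \<phi> fA(1) a by simp
    finally show "e a = f a" .
  qed
  ultimately show ?thesis by blast
qed

theorem proposition2p12:
  fixes R :: "('r, 'c) ring_scheme" and M :: "('r, 'm) rmod"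
  assumes "ring R" and "right_module R M"
  shows "(injective_mod R M TYPE('n) \<longrightarrow> ppi_all R M TYPE('n)) \<and>
         (ppi_all R M TYPE('m \<times> ('m \<times> 'b) set) \<longrightarrow> injective_mod R M TYPE('b))"
proof (intro conjI impI)
  assume "injective_mod R M TYPE('n)"
  thus "ppi_all R M TYPE('n)"
    unfolding injective_mod_def ppi_all_def pseudo_principally_injective_def by blast
next
  assume p: "ppi_all R M TYPE('m \<times> ('m \<times> 'b) set)"
  show "injective_mod R M TYPE('b)" unfolding injective_mod_def
    using dir2[OF assms(2) p] by blast
qed

end
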